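(* Uniformly in $0<\alpha<1/2$, for all $u\ge2$, \[\sqrt{Y_1}=u^{1/(2\alpha)}+O\Bigl(\frac1{u^2}\Bigr),\] where $Y_1=Y_1(u,\alpha)$ is the unique positive solution $Y$ of $u=Y^\alpha-Y^{-1-\alpha}$. *)

theory Defs
  imports Complex_Main
begin

definition Y1 :: "real \<Rightarrow> real \<Rightarrow> real" where
  "Y1 u \<alpha> = (THE Y. Y > 0 \<and> u = Y powr \<alpha> - Y powr (-1 - \<alpha>))"

end

theory Submission
  imports Defs
begin

lemma Y1_prop:
  fixes a u :: real
  assumes a: "0 < a" and u: "0 < u"
  shows "Y1 u a > 0 \<and> u = Y1 u a powr a - Y1 u a powr (-1 - a)"
proof -
  let ?f = "\<lambda>Y::real. Y powr a - Y powr (-1 - a)"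
  define b where "b = (u + 1) powr (1/a)"
  have b1: "1 \<le> b" unfolding b_def using u a by (simp add: ge_one_powr_ge_zero)
  have "b powr a = u + 1" unfolding b_def using u a by (simp add: powr_powr)
  moreover have "b powr (-1 - a) \<le> 1"
  proof -
    have "b powr (-1 - a) \<le> b powr 0" using b1 a by (intro powr_mono) auto
    thus ?thesis using b1 by simp
  qed
  ultimately have fb: "u \<le> ?f b" by simp
  have f1: "?f 1 \<le> u" using u by simp
  have cont: "\<forall>x. 1 \<le> x \<and> x \<le> b \<longrightarrow> isCont ?f x"
    by (auto intro!: continuous_intros)
  obtain Y where Y: "1 \<le> Y" "?f Y = u" using IVT[of ?f 1 u b, OF f1 fb b1 cont] by auto
  have mono: "?f y < ?f z" if "0 < y" "y < z" for y z
  proof -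
    have "y powr a < z powr a" using that a by (simp add: powr_less_mono2)
    moreover have "z powr (-1-a) < y powr (-1-a)" using that a by (intro powr_less_mono2_neg) auto
    ultimately show ?thesis by simp
  qed
  have uniq: "Z = Y" if "Z > 0 \<and> u = ?f Z" for Z
  proof (rule ccontr)
    assume "Z \<noteq> Y"
    then consider "Z < Y" | "Y < Z" by linarith
    then show False using mono[of Z Y] mono[of Y Z] that Y by (cases, auto)
  qed
  have "Y1 u a = Y" unfolding Y1_def
    by (rule the_equality) (use Y uniq in auto)
  then show ?thesis using Y by auto
qed

lemma key_bound:
  fixes t u :: real
  assumes t: "0 < t" and u: "2 \<le> u"
  shows "t * u powr (-t/2) \<le> 4"
proof -
  have "ln (1/2::real) \<le> 1/2 - 1" by (rule ln_le_minus_one) auto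
  hence l2: "ln 2 \<ge> (1/2::real)" by (simp add: ln_div)
  have "2 powr (t/2) = exp (t/2 * ln 2)" by (simp add: powr_def)
  also have "\<dots> \<ge> 1 + t/2 * ln 2" by (rule exp_ge_add_one_self)
  finally have "2 powr (t/2) \<ge> 1 + t/2 * ln 2" .
  moreover have "t/2 * ln 2 \<ge> t/4" using l2 t by (simp add: mult_left_mono[of "1/2" "ln 2" "t/2", simplified])
  moreover have "u powr (t/2) \<ge> 2 powr (t/2)" using u t by (intro powr_mono2) auto
  ultimately have h: "u powr (t/2) \<ge> t/4" by linarith
  have pos: "u powr (t/2) > 0" using u by simp
  have "t * u powr (-t/2) = t / u powr (t/2)" using u by (simp add: powr_minus_divide)
  also have "\<dots> \<le> 4" using h pos by (simp add: divide_le_eq)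
  finally show ?thesis .
qed

theorem lemma14:
  shows "\<exists>C. \<forall>\<alpha> u. 0 < \<alpha> \<and> \<alpha> < 1/2 \<and> u \<ge> 2 \<longrightarrow>
           \<bar>sqrt (Y1 u \<alpha>) - u powr (1 / (2 * \<alpha>))\<bar> \<le> C / u\<^sup>2"
proof (intro exI[of _ 16] allI impI)
  fix a u :: real
  assume H: "0 < a \<and> a < 1/2 \<and> u \<ge> 2"
  hence a: "0 < a" and u: "2 \<le> u" by auto
  have u0: "0 < u" using u by simp
  define Y where "Y = Y1 u a"
  define t where "t = 1/a"
  define v where "v = u powr t"
  have t: "0 < t" unfolding t_def using a by simp
  have Y0: "Y > 0" and Yeq: "Y powr a = u + Y powr (-1 - a)"
    using Y1_prop[OF a u0] unfolding Y_def by auto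
  have v0: "v > 0" unfolding v_def using u0 by simp
  have Ypow: "(Y powr a) powr t = Y" unfolding t_def using a Y0 by (simp add: powr_powr)
  have vpow: "v powr a = u" unfolding v_def t_def using a u0 by (simp add: powr_powr)
  have "Y powr a > u" using Yeq Y0 by simp
  hence "(Y powr a) powr t > u powr t" using t u0 by (intro powr_less_mono2) auto
  hence Yv: "Y > v" using Ypow unfolding v_def by simp
  have "Y powr (-1 - a) \<le> v powr (-1 - a)" using Yv v0 a by (intro powr_mono2') auto
  also have "v powr (-1 - a) = u powr (-t - 1)" unfolding v_def t_def using a u0
    by (simp add: powr_powr field_simps)
  finally have "Y powr a \<le> u + u powr (-t - 1)" using Yeq by simp
  define x where "x = u powr (-t - 2)"
  have x0: "x \<ge> 0" unfolding x_def by simp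
  have e: "-t - 1 = 1 + (-t - 2)" by simp
  have ux: "u * x = u powr (-t - 1)" unfolding x_def
    by (subst e, subst powr_add) (use u0 in simp)
  have Yle1: "Y powr a \<le> u * (1 + x)" using \<open>Y powr a \<le> u + u powr (-t - 1)\<close> ux
    by (simp add: distrib_left)
  have "(Y powr a) powr t \<le> (u * (1 + x)) powr t"
    by (rule powr_mono2) (use t Yle1 in auto)
  hence "Y \<le> (u * (1 + x)) powr t" using Ypow by simp
  also have "\<dots> = v * (1 + x) powr t" unfolding v_def using u0 x0 by (simp add: powr_mult)
  finally have Yle2: "Y \<le> v * (1 + x) powr t" .
  define y where "y = t * x"
  have y0: "y \<ge> 0" unfolding y_def using t x0 by simp
  have "(1 + x) powr t = exp (t * ln (1 + x))" using x0 by (simp add: powr_def)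
  also have "\<dots> \<le> exp y" unfolding y_def using t x0
    by (simp add: ln_add_one_self_le_self mult_left_mono)
  finally have p1: "(1 + x) powr t \<le> exp y" .
  have kb: "t * u powr (-t/2) \<le> 4" by (rule key_bound[OF t u])
  have xs: "x = u powr (-t/2) * u powr (-t/2) * u powr (-2)" unfolding x_def
    using u0 by (simp add: powr_add[symmetric])
  have t2: "t > 2" unfolding t_def using H by (simp add: field_simps)
  have le1: "u powr (-t/2) \<le> 1/2"
  proof -
    have "u powr (-t/2) \<le> u powr (-1)" using u t2 by (intro powr_mono) auto
    also have "\<dots> = 1/u" using u0 by (simp add: powr_minus_divide)
    also have "\<dots> \<le> 1/2" using u by simp
    finally show ?thesis .
  qed
  have u2: "u powr (-2) = 1 / u\<^sup>2" using u0 by (simp add: powr_minus_divide)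
  have u2b: "u powr (-2) \<le> 1/4" unfolding u2 using u
    by (simp add: power2_eq_square mult_mono[of 2 u 2 u, simplified])
  have yx: "y = (t * u powr (-t/2)) * u powr (-t/2) * u powr (-2)"
    unfolding y_def xs by (simp add: mult.assoc)
  have "y \<le> 4 * (1/2) * (1/4)" unfolding yx
    using kb le1 u2b by (intro mult_mono) auto
  hence yb: "y \<le> 1/2" by simp
  have em: "exp (-y) \<ge> 1 - y" using exp_ge_add_one_self[of "-y"] by simp
  have "exp y * exp (-y) = 1" by (simp add: exp_minus)
  hence "exp y * (1 - y) \<le> 1" using em mult_left_mono[OF em, of "exp y"] by simp
  hence ey1: "exp y - 1 \<le> y * exp y" by (simp add: algebra_simps)
  have "exp y * (1/2) \<le> exp y * (1 - y)" using yb by (intro mult_left_mono) auto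
  hence ey2: "exp y \<le> 2" using \<open>exp y * (1 - y) \<le> 1\<close> by linarith
  have eyb: "exp y - 1 \<le> 2 * y" using ey1 mult_left_mono[OF ey2 y0] by (simp add: mult.commute)
  have vx: "v * x = u powr (-2)" unfolding v_def x_def using u0 by (simp add: powr_add[symmetric])
  have "Y - v \<le> v * ((1 + x) powr t - 1)" using Yle2 by (simp add: algebra_simps)
  also have "\<dots> \<le> v * (2 * y)" using p1 eyb v0 by (intro mult_left_mono) auto
  also have "\<dots> = 2 * t * u powr (-2)" unfolding y_def using vx by (simp add: algebra_simps)
  finally have Yv2: "Y - v \<le> 2 * t * u powr (-2)" .
  have sv: "sqrt v = u powr (1 / (2 * a))"
    unfolding v_def t_def using u0 powr_half_sqrt_powr[of u "1/a"] by (simp add: mult.commute)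
  have sv2: "sqrt v = u powr (t/2)" unfolding sv t_def by (simp add: mult.commute)
  have svp: "sqrt v > 0" using v0 by simp
  have sYv: "sqrt Y \<ge> sqrt v" using Yv by simp
  have prod: "(sqrt Y - sqrt v) * (sqrt Y + sqrt v) = Y - v" using Y0 v0
    by (simp add: algebra_simps)
  have "(sqrt Y - sqrt v) * sqrt v \<le> (sqrt Y - sqrt v) * (sqrt Y + sqrt v)"
    using sYv svp by (intro mult_left_mono) auto
  hence "(sqrt Y - sqrt v) * sqrt v \<le> 2 * t * u powr (-2)" using prod Yv2 by simp
  hence d1: "sqrt Y - sqrt v \<le> 2 * t * u powr (-2) / sqrt v" using svp by (simp add: pos_le_divide_eq)
  have "2 * t * u powr (-2) / sqrt v = 2 * (t * u powr (-t/2)) * u powr (-2)"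
    unfolding sv2 using u0 by (simp add: powr_minus_divide)
  also have "\<dots> \<le> 2 * 4 * u powr (-2)" using kb by (intro mult_right_mono mult_left_mono) auto
  also have "\<dots> \<le> 16 / u\<^sup>2" unfolding u2 using u0 by (simp add: divide_right_mono)
  finally have d2: "sqrt Y - sqrt v \<le> 16 / u\<^sup>2" using d1 by linarith
  show "\<bar>sqrt (Y1 u a) - u powr (1 / (2 * a))\<bar> \<le> 16 / u\<^sup>2"
    using d2 sYv unfolding Y_def[symmetric] sv[symmetric] by simp
qed

end
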